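(* Let $\tau$ be an abstract path and let $x$ be a marker of $\tau$ at which one of the gluing moves Ia, Ib, II applies. Then the glued abstract path $\tilde q(\tau,x)$ satisfies $w(\tilde q(\tau,x))=w(\tau)-1$.
   Context: $\mathbb F=\{0,1\}$, $\mathbb N=\{0,1,2,\dots\}$. Abstract vertex types: $o$ (interior), $u$ (unstable), $s$ (stable); $u,s$ are boundary. An abstract edge is $\varepsilon=(\mu,(o_1,u_1,s_1),(o_2,u_2,s_2))\in\mathbb F\times\mathbb N^3\times\mathbb N^3$ such that if $\mu=0$ then $s_1=u_2=0$, and if $\mu=1$ then $o_1=o_2=0$ (interior if $\mu=0$, boundary if $\mu=1$; it has $X_1$ incoming and $X_2$ outgoing ends of type $X$). Its weight is $w(\varepsilon)=1$ if $\mu=0$ and $2-s_1-u_2$ if $\mu=1$. An abstract path $\tau=(T,\tau,\sigma)$: a non-empty finite directed tree $T=(V,E)$ (nodes; arrows, also called breaks; arrow $e$ from $s(e)$ to $t(e)$), $\tau:V\to$ abstract edges, $\sigma:E\to\{o,u,s\}$, such that for each node $v$ and type $X$, $X_1(v)\ge|\{e:t(e)=v,\sigma(e)=X\}|$ and $X_2(v)\ge|\{e:s(e)=v,\sigma(e)=X\}|$, where $X_i(v)$ are the entries of $\tau(v)$. Ends of $\tau$: $X_1(\tau)=\sum_vX_1(v)-|\sigma^{-1}(X)|$, $X_2(\tau)=\sum_vX_2(v)-|\sigma^{-1}(X)|$. Nodes are interior/boundary by $\mu(v)$. $\tau$ is legal if $s_1(\tau)=u_2(\tau)=0$. The restriction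 to a non-empty subtree is a subpath. Weight $w(\tau)=\sum_vw(\tau(v))$. $\mathrm{Star}^o(v)$ is the subtree induced by $v$ and its adjacent interior nodes. Gluing: contract a subtree $T'$ to a node $v^*$ (arrows between $T'$ and the rest reattached to $v^*$ with the same types; other data unchanged) and set $\tau(v^* )=(\mu^*,(o_1(\tau'),u_1(\tau'),s_1(\tau')),(o_2(\tau'),u_2(\tau'),s_2(\tau')))$ where $\tau'$ is the subpath on $T'$. Moves: (Ia) at an arrow both of whose endpoints are interior: contract that arrow, $\mu^*=0$; (Ib) at a boundary node $v$ whose subpath on $\mathrm{Star}^o(v)$ is legal: contract $\mathrm{Star}^o(v)$, $\mu^*=0$; (II) at an arrow both of whose endpoints are boundary: contract it, $\mu^*=1$. A marker is a node or an arrow; at most one move applies at a given marker, and the result is denoted $\tilde q(\tau,x)$. *)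

theory Defs
  imports Main
begin

datatype vtype = TO | TU | TS   \<comment> \<open>o (interior), u (unstable), s (stable)\<close>

text \<open>An abstract edge (mu, (o1,u1,s1), (o2,u2,s2)); mu ranges over F = {0,1}.\<close>
type_synonym aedge = "nat \<times> (nat \<times> nat \<times> nat) \<times> (nat \<times> nat \<times> nat)"

definition emu :: "aedge \<Rightarrow> nat" where "emu \<epsilon> = fst \<epsilon>"

fun tri :: "nat \<times> nat \<times> nat \<Rightarrow> vtype \<Rightarrow> nat" where
  "tri (a, b, c) TO = a" | "tri (a, b, c) TU = b" | "tri (a, b, c) TS = c"

text \<open>X_1 (incoming ends of type X) and X_2 (outgoing ends of type X).\<close>
definition ein :: "aedge \<Rightarrow> vtype \<Rightarrow> nat" where "ein \<epsilon> X = tri (fst (snd \<epsilon>)) X"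
definition eout :: "aedge \<Rightarrow> vtype \<Rightarrow> nat" where "eout \<epsilon> X = tri (snd (snd \<epsilon>)) X"

definition abstract_edge :: "aedge \<Rightarrow> bool" where
  "abstract_edge \<epsilon> \<longleftrightarrow> emu \<epsilon> \<le> 1
     \<and> (emu \<epsilon> = 0 \<longrightarrow> ein \<epsilon> TS = 0 \<and> eout \<epsilon> TU = 0)
     \<and> (emu \<epsilon> = 1 \<longrightarrow> ein \<epsilon> TO = 0 \<and> eout \<epsilon> TO = 0)"

definition eweight :: "aedge \<Rightarrow> int" where
  "eweight \<epsilon> = (if emu \<epsilon> = 0 then 1 else 2 - int (ein \<epsilon> TS) - int (eout \<epsilon> TU))"

record ('v, 'e) apath =
  nodes :: "'v set"
  arrows :: "'e set"
  src :: "'e \<Rightarrow> 'v"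
  tgt :: "'e \<Rightarrow> 'v"
  lab :: "'v \<Rightarrow> aedge"
  sig :: "'e \<Rightarrow> vtype"

definition adj :: "('v, 'e) apath \<Rightarrow> ('v \<times> 'v) set" where
  "adj \<tau> = {(src \<tau> e, tgt \<tau> e) | e. e \<in> arrows \<tau>} \<union> {(tgt \<tau> e, src \<tau> e) | e. e \<in> arrows \<tau>}"

definition is_tree :: "('v, 'e) apath \<Rightarrow> bool" where
  "is_tree \<tau> \<longleftrightarrow> finite (nodes \<tau>) \<and> nodes \<tau> \<noteq> {} \<and> finite (arrows \<tau>)
     \<and> (\<forall>e \<in> arrows \<tau>. src \<tau> e \<in> nodes \<tau> \<and> tgt \<tau> e \<in> nodes \<tau>)
     \<and> card (arrows \<tau>) + 1 = card (nodes \<tau>)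
     \<and> (\<forall>u \<in> nodes \<tau>. \<forall>v \<in> nodes \<tau>. (u, v) \<in> (adj \<tau>)\<^sup>*)"

definition abstract_path :: "('v, 'e) apath \<Rightarrow> bool" where
  "abstract_path \<tau> \<longleftrightarrow> is_tree \<tau>
     \<and> (\<forall>v \<in> nodes \<tau>. abstract_edge (lab \<tau> v))
     \<and> (\<forall>v \<in> nodes \<tau>. \<forall>X.
          ein (lab \<tau> v) X \<ge> card {e \<in> arrows \<tau>. tgt \<tau> e = v \<and> sig \<tau> e = X}
        \<and> eout (lab \<tau> v) X \<ge> card {e \<in> arrows \<tau>. src \<tau> e = v \<and> sig \<tau> e = X})"

definition pweight :: "('v, 'e) apath \<Rightarrow> int" where
  "pweight \<tau> = (\<Sum>v \<in> nodes \<tau>. eweight (lab \<tau> v))"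

definition sub_arrows :: "('v, 'e) apath \<Rightarrow> 'v set \<Rightarrow> 'e set" where
  "sub_arrows \<tau> W = {e \<in> arrows \<tau>. src \<tau> e \<in> W \<and> tgt \<tau> e \<in> W}"

definition sub_in :: "('v, 'e) apath \<Rightarrow> 'v set \<Rightarrow> vtype \<Rightarrow> nat" where
  "sub_in \<tau> W X = (\<Sum>v \<in> W. ein (lab \<tau> v) X) - card {e \<in> sub_arrows \<tau> W. sig \<tau> e = X}"
definition sub_out :: "('v, 'e) apath \<Rightarrow> 'v set \<Rightarrow> vtype \<Rightarrow> nat" where
  "sub_out \<tau> W X = (\<Sum>v \<in> W. eout (lab \<tau> v) X) - card {e \<in> sub_arrows \<tau> W. sig \<tau> e = X}"

definition sub_legal :: "('v, 'e) apath \<Rightarrow> 'v set \<Rightarrow> bool" where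
  "sub_legal \<tau> W \<longleftrightarrow> sub_in \<tau> W TS = 0 \<and> sub_out \<tau> W TU = 0"

definition interior :: "('v, 'e) apath \<Rightarrow> 'v \<Rightarrow> bool" where
  "interior \<tau> v \<longleftrightarrow> emu (lab \<tau> v) = 0"
definition boundary :: "('v, 'e) apath \<Rightarrow> 'v \<Rightarrow> bool" where
  "boundary \<tau> v \<longleftrightarrow> emu (lab \<tau> v) = 1"

definition star_o :: "('v, 'e) apath \<Rightarrow> 'v \<Rightarrow> 'v set" where
  "star_o \<tau> v = insert v {w \<in> nodes \<tau>. interior \<tau> w \<and> (v, w) \<in> adj \<tau>}"

definition glue :: "('v, 'e) apath \<Rightarrow> 'v set \<Rightarrow> 'v \<Rightarrow> nat \<Rightarrow> ('v, 'e) apath" where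
  "glue \<tau> W r m =
    (let f = (\<lambda>v. if v \<in> W then r else v) in
     \<lparr> nodes = (nodes \<tau> - W) \<union> {r},
       arrows = arrows \<tau> - sub_arrows \<tau> W,
       src = (\<lambda>e. f (src \<tau> e)),
       tgt = (\<lambda>e. f (tgt \<tau> e)),
       lab = (\<lambda>v. if v = r then
                   (m, (sub_in \<tau> W TO, sub_in \<tau> W TU, sub_in \<tau> W TS),
                       (sub_out \<tau> W TO, sub_out \<tau> W TU, sub_out \<tau> W TS))
                 else lab \<tau> v),
       sig = sig \<tau> \<rparr>)"

datatype ('v, 'e) marker = MNode 'v | MArrow 'e

definition is_marker :: "('v, 'e) apath \<Rightarrow> ('v, 'e) marker \<Rightarrow> bool" where
  "is_marker \<tau> x = (case x of MNode v \<Rightarrow> v \<in> nodes \<tau> | MArrow e \<Rightarrow> e \<in> arrows \<tau>)"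

definition move_Ia :: "('v, 'e) apath \<Rightarrow> 'e \<Rightarrow> bool" where
  "move_Ia \<tau> e \<longleftrightarrow> e \<in> arrows \<tau> \<and> interior \<tau> (src \<tau> e) \<and> interior \<tau> (tgt \<tau> e)"
definition move_Ib :: "('v, 'e) apath \<Rightarrow> 'v \<Rightarrow> bool" where
  "move_Ib \<tau> v \<longleftrightarrow> v \<in> nodes \<tau> \<and> boundary \<tau> v \<and> sub_legal \<tau> (star_o \<tau> v)"
definition move_II :: "('v, 'e) apath \<Rightarrow> 'e \<Rightarrow> bool" where
  "move_II \<tau> e \<longleftrightarrow> e \<in> arrows \<tau> \<and> boundary \<tau> (src \<tau> e) \<and> boundary \<tau> (tgt \<tau> e)"

definition move_applies :: "('v, 'e) apath \<Rightarrow> ('v, 'e) marker \<Rightarrow> bool" where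
  "move_applies \<tau> x = (case x of MNode v \<Rightarrow> move_Ib \<tau> v
                                | MArrow e \<Rightarrow> move_Ia \<tau> e \<or> move_II \<tau> e)"

definition q_tilde :: "('v, 'e) apath \<Rightarrow> ('v, 'e) marker \<Rightarrow> ('v, 'e) apath" where
  "q_tilde \<tau> x = (case x of
      MNode v \<Rightarrow> glue \<tau> (star_o \<tau> v) v 0
    | MArrow e \<Rightarrow> (if move_Ia \<tau> e
                   then glue \<tau> {src \<tau> e, tgt \<tau> e} (src \<tau> e) 0
                   else glue \<tau> {src \<tau> e, tgt \<tau> e} (src \<tau> e) 1))"

end

theory Submission
  imports Defs
begin

definition conn :: "('v, 'e) apath \<Rightarrow> bool" where
  "conn \<tau> \<longleftrightarrow> finite (nodes \<tau>) \<and> finite (arrows \<tau>)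
     \<and> (\<forall>e \<in> arrows \<tau>. src \<tau> e \<in> nodes \<tau> \<and> tgt \<tau> e \<in> nodes \<tau>)
     \<and> (\<forall>u \<in> nodes \<tau>. \<forall>v \<in> nodes \<tau>. (u, v) \<in> (adj \<tau>)\<^sup>*)"

lemma glue_simps:
  "nodes (glue \<tau> W r m) = (nodes \<tau> - W) \<union> {r}"
  "arrows (glue \<tau> W r m) = arrows \<tau> - sub_arrows \<tau> W"
  "src (glue \<tau> W r m) e = (if src \<tau> e \<in> W then r else src \<tau> e)"
  "tgt (glue \<tau> W r m) e = (if tgt \<tau> e \<in> W then r else tgt \<tau> e)"
  "lab (glue \<tau> W r m) v = (if v = r then
                   (m, (sub_in \<tau> W TO, sub_in \<tau> W TU, sub_in \<tau> W TS),
                       (sub_out \<tau> W TO, sub_out \<tau> W TU, sub_out \<tau> W TS))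
                 else lab \<tau> v)"
  by (simp_all add: glue_def Let_def)

lemma glue_conn:
  assumes c: "conn \<tau>" and W: "W \<subseteq> nodes \<tau>" and r: "r \<in> W"
  shows "conn (glue \<tau> W r m)"
proof -
  let ?f = "\<lambda>v. if v \<in> W then r else v"
  let ?g = "glue \<tau> W r m"
  have step: "(?f y, ?f z) \<in> (adj ?g)\<^sup>*" if "(y, z) \<in> adj \<tau>" for y z
  proof -
    from that obtain e where e: "e \<in> arrows \<tau>"
      and yz: "(y = src \<tau> e \<and> z = tgt \<tau> e) \<or> (y = tgt \<tau> e \<and> z = src \<tau> e)"
      unfolding adj_def by blast
    show ?thesis
    proof (cases "e \<in> sub_arrows \<tau> W")
      case True
      then have "y \<in> W" "z \<in> W" using yz unfolding sub_arrows_def by auto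
      then show ?thesis by simp
    next
      case False
      then have "e \<in> arrows ?g" using e by (simp add: glue_simps)
      then have "(?f y, ?f z) \<in> adj ?g" using yz unfolding adj_def glue_simps by blast
      then show ?thesis by blast
    qed
  qed
  have gen: "(?f u, ?f v) \<in> (adj ?g)\<^sup>*" if "(u, v) \<in> (adj \<tau>)\<^sup>*" for u v
    using that
  proof (induction rule: rtrancl_induct)
    case base then show ?case by simp
  next
    case (step y z)
    then show ?case using step(3) \<open>(y,z) \<in> adj \<tau>\<close>
      by (meson rtrancl_trans \<open>\<And>y z. (y, z) \<in> adj \<tau> \<Longrightarrow> _\<close>)
  qed
  have fid: "?f u = u" if "u \<in> nodes ?g" for u
    using that r by (auto simp: glue_simps)
  show ?thesis
    unfolding conn_def
  proof (intro conjI ballI)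
    show "finite (nodes ?g)" using c by (simp add: conn_def glue_simps)
    show "finite (arrows ?g)" using c by (simp add: conn_def glue_simps)
  next
    fix e assume "e \<in> arrows ?g"
    then have "e \<in> arrows \<tau>" by (simp add: glue_simps)
    then show "src ?g e \<in> nodes ?g" "tgt ?g e \<in> nodes ?g"
      using c by (auto simp: conn_def glue_simps)
  next
    fix u v assume u: "u \<in> nodes ?g" and v: "v \<in> nodes ?g"
    then have "u \<in> nodes \<tau>" "v \<in> nodes \<tau>" using W r by (auto simp: glue_simps)
    then have "(u, v) \<in> (adj \<tau>)\<^sup>*" using c by (simp add: conn_def)
    then have "(?f u, ?f v) \<in> (adj ?g)\<^sup>*" by (rule gen)
    then show "(u, v) \<in> (adj ?g)\<^sup>*" using fid[OF u] fid[OF v] by simp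
  qed
qed

lemma conn_card: "conn \<tau> \<Longrightarrow> card (nodes \<tau>) \<le> card (arrows \<tau>) + 1"
proof (induction "card (arrows \<tau>)" arbitrary: \<tau> rule: less_induct)
  case less
  note c = less.prems
  show ?case
  proof (cases "\<exists>e \<in> arrows \<tau>. src \<tau> e \<noteq> tgt \<tau> e")
    case True
    then obtain e where e: "e \<in> arrows \<tau>" "src \<tau> e \<noteq> tgt \<tau> e" by blast
    let ?W = "{src \<tau> e, tgt \<tau> e}"
    let ?g = "glue \<tau> ?W (src \<tau> e) 0"
    have W: "?W \<subseteq> nodes \<tau>" using c e by (auto simp: conn_def)
    have cg: "conn ?g" by (rule glue_conn[OF c W]) simp
    have fin: "finite (nodes \<tau>)" "finite (arrows \<tau>)" using c by (auto simp: conn_def)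
    have sub: "sub_arrows \<tau> ?W \<subseteq> arrows \<tau>" "e \<in> sub_arrows \<tau> ?W"
      using e by (auto simp: sub_arrows_def)
    have fs: "finite (sub_arrows \<tau> ?W)" using sub fin finite_subset by blast
    have ca: "card (arrows ?g) = card (arrows \<tau>) - card (sub_arrows \<tau> ?W)"
      by (simp add: glue_simps card_Diff_subset fs sub)
    have "card (sub_arrows \<tau> ?W) \<ge> 1" using fs sub(2) card_0_eq by fastforce
    moreover have "card (sub_arrows \<tau> ?W) \<le> card (arrows \<tau>)" using sub fin card_mono by blast
    ultimately have lt: "card (arrows ?g) < card (arrows \<tau>)" using ca by linarith
    have cn: "card (nodes ?g) = card (nodes \<tau>) - 1"
    proof -
      have "nodes ?g = insert (src \<tau> e) (nodes \<tau> - ?W)" by (auto simp: glue_simps)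
      then have "card (nodes ?g) = card (nodes \<tau> - ?W) + 1" using fin by simp
      moreover have "card (nodes \<tau> - ?W) = card (nodes \<tau>) - 2"
        using W e(2) fin by (simp add: card_Diff_subset)
      moreover have "card ?W \<le> card (nodes \<tau>)" using W fin card_mono by blast
      ultimately show ?thesis using e(2) by simp
    qed
    have "card (nodes ?g) \<le> card (arrows ?g) + 1" using less.hyps[OF lt cg] .
    moreover have "card ?W \<le> card (nodes \<tau>)" using W fin card_mono by blast
    ultimately show ?thesis using cn ca lt e(2) by simp
  next
    case False
    then have "adj \<tau> \<subseteq> Id" unfolding adj_def by auto
    have "u = v" if "(u, v) \<in> (adj \<tau>)\<^sup>*" for u v
      using that by (induction rule: rtrancl_induct) (use \<open>adj \<tau> \<subseteq> Id\<close> in auto)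
    then have "\<forall>a1\<in>nodes \<tau>. \<forall>a2\<in>nodes \<tau>. a1 = a2" using c by (auto simp: conn_def)
    then have "card (nodes \<tau>) \<le> Suc 0" using c by (simp add: conn_def card_le_Suc0_iff_eq)
    then show ?thesis by simp
  qed
qed

lemma tree_sub_card:
  assumes t: "is_tree \<tau>" and W: "W \<subseteq> nodes \<tau>" "W \<noteq> {}"
  shows "card (sub_arrows \<tau> W) + 1 \<le> card W"
proof -
  have c: "conn \<tau>" using t by (simp add: is_tree_def conn_def)
  obtain r where r: "r \<in> W" using W by blast
  let ?g = "glue \<tau> W r 0"
  have cg: "conn ?g" using glue_conn[OF c W(1) r] .
  have fin: "finite (nodes \<tau>)" "finite (arrows \<tau>)" using c by (auto simp: conn_def)
  have fW: "finite W" using W fin finite_subset by blast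
  have sub: "sub_arrows \<tau> W \<subseteq> arrows \<tau>" by (auto simp: sub_arrows_def)
  have fs: "finite (sub_arrows \<tau> W)" using sub fin finite_subset by blast
  have ca: "card (arrows ?g) = card (arrows \<tau>) - card (sub_arrows \<tau> W)"
    by (simp add: glue_simps card_Diff_subset fs sub)
  have "nodes ?g = insert r (nodes \<tau> - W)" using r by (auto simp: glue_simps)
  then have cn: "card (nodes ?g) = card (nodes \<tau>) - card W + 1"
    using fin fW W r by (simp add: card_Diff_subset)
  have "card (nodes ?g) \<le> card (arrows ?g) + 1" using conn_card[OF cg] .
  moreover have "card W \<le> card (nodes \<tau>)" using W fin card_mono by blast
  moreover have "card (sub_arrows \<tau> W) \<le> card (arrows \<tau>)" using sub fin card_mono by blast
  moreover have "card (arrows \<tau>) + 1 = card (nodes \<tau>)" using t by (simp add: is_tree_def)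
  moreover have "card W \<ge> 1" using fW W(2) card_0_eq by fastforce
  ultimately show ?thesis using ca cn by linarith
qed

lemma glue_weight:
  assumes fin: "finite (nodes \<tau>)" and W: "W \<subseteq> nodes \<tau>" and r: "r \<in> W"
  shows "pweight (glue \<tau> W r m) = pweight \<tau> - (\<Sum>w\<in>W. eweight (lab \<tau> w))
           + eweight (lab (glue \<tau> W r m) r)"
proof -
  let ?g = "glue \<tau> W r m"
  have n: "nodes ?g = insert r (nodes \<tau> - W)" using r by (auto simp: glue_simps)
  have "pweight ?g = eweight (lab ?g r) + (\<Sum>v\<in>nodes \<tau> - W. eweight (lab ?g v))"
    unfolding pweight_def n using fin r by (simp add: sum.insert)
  also have "(\<Sum>v\<in>nodes \<tau> - W. eweight (lab ?g v)) = (\<Sum>v\<in>nodes \<tau> - W. eweight (lab \<tau> v))"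
    using r by (intro sum.cong) (auto simp: glue_simps)
  also have "\<dots> = pweight \<tau> - (\<Sum>w\<in>W. eweight (lab \<tau> w))"
    unfolding pweight_def using sum.subset_diff[OF W fin, of "\<lambda>v. eweight (lab \<tau> v)"] by simp
  finally show ?thesis by simp
qed

lemma ap_facts:
  assumes "abstract_path \<tau>"
  shows "is_tree \<tau>" "\<And>v. v \<in> nodes \<tau> \<Longrightarrow> abstract_edge (lab \<tau> v)"
    "finite (nodes \<tau>)" "finite (arrows \<tau>)"
    "\<And>e. e \<in> arrows \<tau> \<Longrightarrow> src \<tau> e \<in> nodes \<tau> \<and> tgt \<tau> e \<in> nodes \<tau>"
    "\<And>e. e \<in> arrows \<tau> \<Longrightarrow> eout (lab \<tau> (src \<tau> e)) (sig \<tau> e) \<ge> 1"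
    "\<And>e. e \<in> arrows \<tau> \<Longrightarrow> ein (lab \<tau> (tgt \<tau> e)) (sig \<tau> e) \<ge> 1"
    "\<And>v X. v \<in> nodes \<tau> \<Longrightarrow> ein (lab \<tau> v) X \<ge> card {e \<in> arrows \<tau>. tgt \<tau> e = v \<and> sig \<tau> e = X}"
    "\<And>v X. v \<in> nodes \<tau> \<Longrightarrow> eout (lab \<tau> v) X \<ge> card {e \<in> arrows \<tau>. src \<tau> e = v \<and> sig \<tau> e = X}"
proof -
  show t: "is_tree \<tau>" using assms by (simp add: abstract_path_def)
  show "\<And>v. v \<in> nodes \<tau> \<Longrightarrow> abstract_edge (lab \<tau> v)" using assms by (simp add: abstract_path_def)
  show fn: "finite (nodes \<tau>)" and fa: "finite (arrows \<tau>)" using t by (auto simp: is_tree_def)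
  show ep: "\<And>e. e \<in> arrows \<tau> \<Longrightarrow> src \<tau> e \<in> nodes \<tau> \<and> tgt \<tau> e \<in> nodes \<tau>"
    using t by (auto simp: is_tree_def)
  show ib: "\<And>v X. v \<in> nodes \<tau> \<Longrightarrow> ein (lab \<tau> v) X \<ge> card {e \<in> arrows \<tau>. tgt \<tau> e = v \<and> sig \<tau> e = X}"
    and ob: "\<And>v X. v \<in> nodes \<tau> \<Longrightarrow> eout (lab \<tau> v) X \<ge> card {e \<in> arrows \<tau>. src \<tau> e = v \<and> sig \<tau> e = X}"
    using assms by (auto simp: abstract_path_def)
  fix e assume e: "e \<in> arrows \<tau>"
  have "card {e' \<in> arrows \<tau>. src \<tau> e' = src \<tau> e \<and> sig \<tau> e' = sig \<tau> e} \<ge> 1"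
    using e fa by (metis (mono_tags, lifting) One_nat_def Suc_leI card_gt_0_iff empty_iff finite_subset mem_Collect_eq subsetI)
  then show "eout (lab \<tau> (src \<tau> e)) (sig \<tau> e) \<ge> 1" using ob[of "src \<tau> e" "sig \<tau> e"] ep[OF e] by linarith
  have "card {e' \<in> arrows \<tau>. tgt \<tau> e' = tgt \<tau> e \<and> sig \<tau> e' = sig \<tau> e} \<ge> 1"
    using e fa by (metis (mono_tags, lifting) One_nat_def Suc_leI card_gt_0_iff empty_iff finite_subset mem_Collect_eq subsetI)
  then show "ein (lab \<tau> (tgt \<tau> e)) (sig \<tau> e) \<ge> 1" using ib[of "tgt \<tau> e" "sig \<tau> e"] ep[OF e] by linarith
qed

lemma no_loop:
  assumes "abstract_path \<tau>" "e \<in> arrows \<tau>"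
  shows "src \<tau> e \<noteq> tgt \<tau> e"
proof
  assume eq: "src \<tau> e = tgt \<tau> e"
  have W: "{src \<tau> e} \<subseteq> nodes \<tau>" using ap_facts(5)[OF assms] by simp
  have "e \<in> sub_arrows \<tau> {src \<tau> e}" using assms(2) eq by (simp add: sub_arrows_def)
  moreover have "finite (sub_arrows \<tau> {src \<tau> e})"
    using ap_facts(4)[OF assms(1)] by (simp add: sub_arrows_def)
  ultimately have "card (sub_arrows \<tau> {src \<tau> e}) \<ge> 1" using card_0_eq by fastforce
  with tree_sub_card[OF ap_facts(1)[OF assms(1)] W] show False by simp
qed

lemma card_single_P: "card {x. x = e \<and> P x} = (if P e then 1 else 0)"
proof -
  have "{x. x = e \<and> P x} = (if P e then {e} else {})" by auto
  then show ?thesis by simp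
qed

lemma case_Ia:
  assumes ap: "abstract_path \<tau>" and m: "move_Ia \<tau> e"
  shows "pweight (glue \<tau> {src \<tau> e, tgt \<tau> e} (src \<tau> e) 0) = pweight \<tau> - 1"
proof -
  have e: "e \<in> arrows \<tau>" and i: "interior \<tau> (src \<tau> e)" "interior \<tau> (tgt \<tau> e)"
    using m by (auto simp: move_Ia_def)
  have ne: "src \<tau> e \<noteq> tgt \<tau> e" using no_loop[OF ap e] .
  have W: "{src \<tau> e, tgt \<tau> e} \<subseteq> nodes \<tau>" using ap_facts(5)[OF ap e] by simp
  have s: "(\<Sum>w\<in>{src \<tau> e, tgt \<tau> e}. eweight (lab \<tau> w)) = 2"
    using ne i by (simp add: eweight_def interior_def)
  show ?thesis
    using glue_weight[OF ap_facts(3)[OF ap] W, of "src \<tau> e" 0] s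
    by (simp add: glue_simps eweight_def emu_def)
qed

lemma case_II:
  assumes ap: "abstract_path \<tau>" and m: "move_II \<tau> e"
  shows "pweight (glue \<tau> {src \<tau> e, tgt \<tau> e} (src \<tau> e) 1) = pweight \<tau> - 1"
proof -
  let ?a = "src \<tau> e" and ?b = "tgt \<tau> e"
  let ?W = "{?a, ?b}"
  have e: "e \<in> arrows \<tau>" and bd: "boundary \<tau> ?a" "boundary \<tau> ?b"
    using m by (auto simp: move_II_def)
  have ne: "?a \<noteq> ?b" using no_loop[OF ap e] .
  have W: "?W \<subseteq> nodes \<tau>" using ap_facts(5)[OF ap e] by simp
  have fs: "finite (sub_arrows \<tau> ?W)"
    using ap_facts(4)[OF ap] by (simp add: sub_arrows_def)
  have eS: "e \<in> sub_arrows \<tau> ?W" using e by (simp add: sub_arrows_def)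
  have "card (sub_arrows \<tau> ?W) \<le> Suc 0" using tree_sub_card[OF ap_facts(1)[OF ap] W] ne by simp
  then have S: "sub_arrows \<tau> ?W = {e}" using eS fs by (auto simp: card_le_Suc0_iff_eq)
  have aeA: "abstract_edge (lab \<tau> ?a)" "abstract_edge (lab \<tau> ?b)"
    using ap_facts(2)[OF ap] W by auto
  have mu: "emu (lab \<tau> ?a) = 1" "emu (lab \<tau> ?b) = 1" using bd by (auto simp: boundary_def)
  have o0: "eout (lab \<tau> ?a) TO = 0" using aeA mu by (simp add: abstract_edge_def)
  have out1: "eout (lab \<tau> ?a) (sig \<tau> e) \<ge> 1" and in1: "ein (lab \<tau> ?b) (sig \<tau> e) \<ge> 1"
    using ap_facts(6,7)[OF ap e] by auto
  have sO: "sig \<tau> e \<noteq> TO" using o0 out1 by auto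
  define s1a where "s1a = ein (lab \<tau> ?a) TS"
  define s1b where "s1b = ein (lab \<tau> ?b) TS"
  define u2a where "u2a = eout (lab \<tau> ?a) TU"
  define u2b where "u2b = eout (lab \<tau> ?b) TU"
  have sumW: "(\<Sum>w\<in>?W. eweight (lab \<tau> w)) = (2 - int s1a - int u2a) + (2 - int s1b - int u2b)"
    using ne mu by (simp add: eweight_def s1a_def s1b_def u2a_def u2b_def)
  have si: "sub_in \<tau> ?W TS = s1a + s1b - (if sig \<tau> e = TS then 1 else 0)"
    using ne S by (simp add: card_single_P sub_in_def s1a_def s1b_def)
  have so: "sub_out \<tau> ?W TU = u2a + u2b - (if sig \<tau> e = TU then 1 else 0)"
    using ne S by (simp add: card_single_P sub_out_def u2a_def u2b_def)
  have nw: "eweight (lab (glue \<tau> ?W ?a 1) ?a) = 2 - int (sub_in \<tau> ?W TS) - int (sub_out \<tau> ?W TU)"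
    by (simp add: glue_simps eweight_def emu_def ein_def eout_def)
  have key: "int (sub_in \<tau> ?W TS) + int (sub_out \<tau> ?W TU) = int s1a + int s1b + int u2a + int u2b - 1"
  proof (cases "sig \<tau> e")
    case TO then show ?thesis using sO by simp
  next
    case TU
    then have "u2a \<ge> 1" using out1 by (simp add: u2a_def)
    then show ?thesis using si so TU by simp
  next
    case TS
    then have "s1b \<ge> 1" using in1 by (simp add: s1b_def)
    then show ?thesis using si so TS by simp
  qed
  show ?thesis
    using glue_weight[OF ap_facts(3)[OF ap] W, of ?a 1] sumW nw key by simp
qed

lemma case_Ib:
  assumes ap: "abstract_path \<tau>" and m: "move_Ib \<tau> v"
  shows "pweight (glue \<tau> (star_o \<tau> v) v 0) = pweight \<tau> - 1"
proof -
  let ?W = "star_o \<tau> v"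
  let ?S = "sub_arrows \<tau> ?W"
  have v: "v \<in> nodes \<tau>" and bv: "boundary \<tau> v" and leg: "sub_legal \<tau> ?W"
    using m by (auto simp: move_Ib_def)
  have fn: "finite (nodes \<tau>)" and fa: "finite (arrows \<tau>)" using ap_facts[OF ap] by auto
  have W: "?W \<subseteq> nodes \<tau>" using v by (auto simp: star_o_def)
  have vW: "v \<in> ?W" by (simp add: star_o_def)
  have fW: "finite ?W" using W fn finite_subset by blast
  have Ssub: "?S \<subseteq> arrows \<tau>" by (auto simp: sub_arrows_def)
  have fS: "finite ?S" using Ssub fa finite_subset by blast
  have oth: "interior \<tau> w \<and> (v, w) \<in> adj \<tau> \<and> w \<in> nodes \<tau>" if "w \<in> ?W - {v}" for w
    using that by (auto simp: star_o_def)
  have aev: "abstract_edge (lab \<tau> v)" using ap_facts(2)[OF ap v] .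
  have muv: "emu (lab \<tau> v) = 1" using bv by (simp add: boundary_def)
  have intw: "ein (lab \<tau> w) TS = 0 \<and> eout (lab \<tau> w) TU = 0 \<and> emu (lab \<tau> w) = 0"
    if "w \<in> ?W - {v}" for w
    using oth[OF that] ap_facts(2)[OF ap] by (auto simp: abstract_edge_def interior_def)
  define P where "P w e \<longleftrightarrow> e \<in> arrows \<tau> \<and> ((src \<tau> e = v \<and> tgt \<tau> e = w) \<or> (src \<tau> e = w \<and> tgt \<tau> e = v))" for w e
  define ew where "ew w = (SOME e. P w e)" for w
  have Pew: "P w (ew w)" if "w \<in> ?W - {v}" for w
  proof -
    have "(v, w) \<in> adj \<tau>" using oth[OF that] by blast
    then have "\<exists>e. P w e" unfolding adj_def P_def by blast
    then show ?thesis unfolding ew_def by (rule someI_ex)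
  qed
  have ewS: "ew w \<in> ?S" if "w \<in> ?W - {v}" for w
    using Pew[OF that] that vW by (auto simp: P_def sub_arrows_def)
  have inj: "inj_on ew (?W - {v})"
  proof (rule inj_onI)
    fix w1 w2 assume w1: "w1 \<in> ?W - {v}" and w2: "w2 \<in> ?W - {v}" and eq: "ew w1 = ew w2"
    show "w1 = w2" using Pew[OF w1] Pew[OF w2] eq w1 w2 unfolding P_def by auto
  qed
  have cimg: "card (ew ` (?W - {v})) = card ?W - 1"
    using card_image[OF inj] fW vW by simp
  have le: "card ?S + 1 \<le> card ?W" using tree_sub_card[OF ap_facts(1)[OF ap] W] vW by blast
  have isub: "ew ` (?W - {v}) \<subseteq> ?S" using ewS by blast
  have "card (ew ` (?W - {v})) \<le> card ?S" using card_mono[OF fS isub] .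
  then have img: "ew ` (?W - {v}) = ?S"
    using card_subset_eq[OF fS isub] cimg le by linarith
  have incv: "src \<tau> e = v \<or> tgt \<tau> e = v" if "e \<in> ?S" for e
  proof -
    from that img obtain w where "w \<in> ?W - {v}" "e = ew w" by blast
    then show ?thesis using Pew by (auto simp: P_def)
  qed
  have noO: "sig \<tau> e \<noteq> TO" if "e \<in> ?S" for e
  proof
    assume sO: "sig \<tau> e = TO"
    have e: "e \<in> arrows \<tau>" using that Ssub by blast
    have "eout (lab \<tau> v) TO = 0" "ein (lab \<tau> v) TO = 0" using aev muv by (auto simp: abstract_edge_def)
    then show False using incv[OF that] ap_facts(6,7)[OF ap e] sO by auto
  qed
  define ST where "ST = {e \<in> ?S. sig \<tau> e = TS}"
  define SU where "SU = {e \<in> ?S. sig \<tau> e = TU}"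
  have STsub: "ST \<subseteq> {e \<in> arrows \<tau>. tgt \<tau> e = v \<and> sig \<tau> e = TS}"
  proof
    fix e assume eST: "e \<in> ST"
    then have eS: "e \<in> ?S" and sg: "sig \<tau> e = TS" by (auto simp: ST_def)
    have e: "e \<in> arrows \<tau>" using eS Ssub by blast
    have "tgt \<tau> e = v"
    proof (rule ccontr)
      assume "tgt \<tau> e \<noteq> v"
      moreover have "tgt \<tau> e \<in> ?W" using eS by (simp add: sub_arrows_def)
      ultimately have "ein (lab \<tau> (tgt \<tau> e)) TS = 0" using intw by blast
      then show False using ap_facts(7)[OF ap e] sg by simp
    qed
    then show "e \<in> {e \<in> arrows \<tau>. tgt \<tau> e = v \<and> sig \<tau> e = TS}" using e sg by simp
  qed
  have SUsub: "SU \<subseteq> {e \<in> arrows \<tau>. src \<tau> e = v \<and> sig \<tau> e = TU}"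
  proof
    fix e assume eSU: "e \<in> SU"
    then have eS: "e \<in> ?S" and sg: "sig \<tau> e = TU" by (auto simp: SU_def)
    have e: "e \<in> arrows \<tau>" using eS Ssub by blast
    have "src \<tau> e = v"
    proof (rule ccontr)
      assume "src \<tau> e \<noteq> v"
      moreover have "src \<tau> e \<in> ?W" using eS by (simp add: sub_arrows_def)
      ultimately have "eout (lab \<tau> (src \<tau> e)) TU = 0" using intw by blast
      then show False using ap_facts(6)[OF ap e] sg by simp
    qed
    then show "e \<in> {e \<in> arrows \<tau>. src \<tau> e = v \<and> sig \<tau> e = TU}" using e sg by simp
  qed
  have cST: "card ST \<le> ein (lab \<tau> v) TS"
    using card_mono[OF _ STsub] fa ap_facts(8)[OF ap v, of TS] by simp
  have cSU: "card SU \<le> eout (lab \<tau> v) TU"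
    using card_mono[OF _ SUsub] fa ap_facts(9)[OF ap v, of TU] by simp
  have sumin: "(\<Sum>w\<in>?W. ein (lab \<tau> w) TS) = ein (lab \<tau> v) TS"
    using sum.remove[OF fW vW, of "\<lambda>w. ein (lab \<tau> w) TS"] intw by simp
  have sumout: "(\<Sum>w\<in>?W. eout (lab \<tau> w) TU) = eout (lab \<tau> v) TU"
    using sum.remove[OF fW vW, of "\<lambda>w. eout (lab \<tau> w) TU"] intw by simp
  have eqT: "ein (lab \<tau> v) TS = card ST"
    using leg cST unfolding sub_legal_def sub_in_def sumin ST_def by simp
  have eqU: "eout (lab \<tau> v) TU = card SU"
    using leg cSU unfolding sub_legal_def sub_out_def sumout SU_def by simp
  have Sun: "?S = ST \<union> SU" "ST \<inter> SU = {}"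
    using noO unfolding ST_def SU_def by (auto intro: vtype.exhaust)
  have cS: "card ?S = card ST + card SU"
    using Sun fS by (simp add: card_Un_disjoint)
  have cS2: "card ?S = card ?W - 1" using img cimg by simp
  have sumW: "(\<Sum>w\<in>?W. eweight (lab \<tau> w)) = eweight (lab \<tau> v) + int (card ?W - 1)"
  proof -
    have "(\<Sum>w\<in>?W - {v}. eweight (lab \<tau> w)) = (\<Sum>w\<in>?W - {v}. 1)"
      using intw by (intro sum.cong) (auto simp: eweight_def)
    then show ?thesis using sum.remove[OF fW vW, of "\<lambda>w. eweight (lab \<tau> w)"] fW vW by simp
  qed
  have ewv: "eweight (lab \<tau> v) = 2 - int (card ST) - int (card SU)"
    using muv eqT eqU by (simp add: eweight_def)
  have cW: "card ?W \<ge> 1" using fW vW card_0_eq by fastforce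
  have nw: "eweight (lab (glue \<tau> ?W v 0) v) = 1"
    by (simp add: glue_simps eweight_def emu_def)
  show ?thesis
    using glue_weight[OF fn W vW, of 0] sumW ewv nw cS cS2 cW by simp
qed

theorem lemma3p8:
  fixes \<tau> :: "('v, 'e) apath" and x :: "('v, 'e) marker"
  assumes "abstract_path \<tau>" and "is_marker \<tau> x" and "move_applies \<tau> x"
  shows "pweight (q_tilde \<tau> x) = pweight \<tau> - 1"
proof (cases x)
  case (MNode v)
  then show ?thesis using assms case_Ib by (simp add: q_tilde_def move_applies_def)
next
  case (MArrow e)
  show ?thesis
  proof (cases "move_Ia \<tau> e")
    case True
    then show ?thesis using MArrow assms case_Ia by (simp add: q_tilde_def)
  next
    case False
    then have "move_II \<tau> e" using MArrow assms(3) by (simp add: move_applies_def)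
    then show ?thesis using MArrow False assms case_II by (simp add: q_tilde_def)
  qed
qed

end
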